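(* Let the target locations $S^*_1,\dots,S^*_M$ be pairwise distinct, let $(S_n)_{n\ge1}$ satisfy infill asymptotics with respect to them, and let $k_N$ be the adaptive number-of-neighbors sequence for some positive $(a_t)$ with $a_t\to0$. Then there exists $N_0$ such that for all $N\ge N_0$, all $m\ne m'$ and all $1\le n\le N$, $\Psi^{N,k_N}_{mn}\Psi^{N,k_N}_{m'n}=0$.
   Context: $(\mathcal S,d)$ metric space. Infill asymptotics: for every $m$ and open $U\ni S^*_m$, infinitely many $n$ satisfy $S_n\in U$. $\Psi^{N,k}\in\mathbb R^{M\times N}$: $\Psi^{N,k}_{mn}=1/k$ if $S_n$ is among the $k$ points of $\{S_1,\dots,S_N\}$ closest to $S^*_m$, else $0$ (ties broken uniformly at random). Adaptive sequence: $R_{N,t}=\max_m\max\{d(S^*_m,S_n):n\le N,\ S_n \text{ among the } t \text{ nearest neighbors of } S^*_m\text{ in }\{S_1,\dots,S_N\}\}$; $k_1=1$ and $k_{N+1}=k_N+1$ if $R_{N+1,k_N+1}\le a_{k_N}$, else $k_{N+1}=k_N$. *)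

theory Defs
  imports "HOL-Analysis.Analysis"
begin

definition is_knn :: "(nat \<Rightarrow> 'a::metric_space) \<Rightarrow> nat \<Rightarrow> nat \<Rightarrow> 'a \<Rightarrow> nat set \<Rightarrow> bool" where
  "is_knn S N t x A \<longleftrightarrow> A \<subseteq> {1..N} \<and> card A = min t N \<and>
     (\<forall>n\<in>A. \<forall>n'\<in>{1..N} - A. dist x (S n) \<le> dist x (S n'))"

definition infill :: "(nat \<Rightarrow> 'a::metric_space) \<Rightarrow> (nat \<Rightarrow> 'a) \<Rightarrow> nat \<Rightarrow> bool" where
  "infill S Sstar M \<longleftrightarrow> (\<forall>m\<in>{1..M}. \<forall>U. open U \<and> Sstar m \<in> U \<longrightarrow> infinite {n. n \<ge> 1 \<and> S n \<in> U})"

text \<open>R_{N,t}: maximal distance from a target to a point among its t nearest neighbours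
  (independent of tie-breaking).\<close>
definition Rdist :: "(nat \<Rightarrow> 'a::metric_space) \<Rightarrow> (nat \<Rightarrow> 'a) \<Rightarrow> nat \<Rightarrow> nat \<Rightarrow> nat \<Rightarrow> real" where
  "Rdist S Sstar M N t = Max ((\<lambda>m. Sup {dist (Sstar m) (S n) | n A. n \<le> N \<and> is_knn S N t (Sstar m) A \<and> n \<in> A}) ` {1..M})"

definition adaptive_k :: "(nat \<Rightarrow> 'a::metric_space) \<Rightarrow> (nat \<Rightarrow> 'a) \<Rightarrow> nat \<Rightarrow> (nat \<Rightarrow> real) \<Rightarrow> (nat \<Rightarrow> nat) \<Rightarrow> bool" where
  "adaptive_k S Sstar M a k \<longleftrightarrow> k 1 = 1 \<and>
     (\<forall>N\<ge>1. k (N + 1) = (if Rdist S Sstar M (N + 1) (k N + 1) \<le> a (k N) then k N + 1 else k N))"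

text \<open>Entry (m,n) of Psi^{N,k}, given the (tie-broken) neighbour set A of target m.\<close>
definition Psi_entry :: "nat \<Rightarrow> nat set \<Rightarrow> nat \<Rightarrow> real" where
  "Psi_entry k A n = (if n \<in> A then 1 / real k else 0)"

end

theory Submission
  imports Defs
begin


lemma sel_exists:
  fixes f :: "nat \<Rightarrow> real"
  assumes "finite I" "t \<le> card I"
  shows "\<exists>A\<subseteq>I. card A = t \<and> (\<forall>a\<in>A. \<forall>b\<in>I-A. f a \<le> f b)"
  using assms(2)
proof (induction t)
  case 0 then show ?case by auto
next
  case (Suc t)
  then obtain A where A: "A \<subseteq> I" "card A = t" "\<forall>a\<in>A. \<forall>b\<in>I-A. f a \<le> f b" by auto
  have fA: "finite A" using A(1) assms(1) finite_subset by blast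
  have ne: "I - A \<noteq> {}" using A Suc.prems assms(1)
    by (metis Diff_eq_empty_iff card_mono not_less_eq_eq subset_antisym)
  obtain b where b: "b \<in> I - A" "\<forall>c\<in>I-A. f b \<le> f c"
    using ex_min_if_finite[of "f ` (I - A)"] ne assms(1)
    by (metis (no_types, lifting) Diff_subset arg_min_if_finite(1) arg_min_least finite_subset)
  show ?case
  proof (intro exI[of _ "insert b A"] conjI)
    show "insert b A \<subseteq> I" using A b by auto
    show "card (insert b A) = Suc t" using A b fA by auto
    show "\<forall>a\<in>insert b A. \<forall>c\<in>I - insert b A. f a \<le> f c" using A b by auto
  qed
qed

lemma knn_exists:
  assumes "t \<le> N"
  shows "\<exists>A. is_knn S N t x A"
proof -
  obtain A where "A \<subseteq> {1..N}" "card A = t" "\<forall>a\<in>A. \<forall>b\<in>{1..N}-A. dist x (S a) \<le> dist x (S b)"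
    using sel_exists[of "{1..N}" t "\<lambda>n. dist x (S n)"] assms by auto
  then show ?thesis unfolding is_knn_def using assms by (intro exI[of _ A]) auto
qed

lemma knn_bound:
  assumes "is_knn S N t x A" "t \<le> N" "t \<le> card {n\<in>{1..N}. dist x (S n) \<le> r}" "n \<in> A"
  shows "dist x (S n) \<le> r"
proof (rule ccontr)
  assume c: "\<not> ?thesis"
  let ?B = "{n\<in>{1..N}. dist x (S n) \<le> r}"
  have A: "A \<subseteq> {1..N}" "card A = t" "\<forall>n\<in>A. \<forall>n'\<in>{1..N} - A. dist x (S n) \<le> dist x (S n')"
    using assms(1,2) unfolding is_knn_def by auto
  have "?B \<subseteq> A"
  proof
    fix b assume b: "b \<in> ?B"
    show "b \<in> A"
    proof (rule ccontr)
      assume "b \<notin> A"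
      then have "dist x (S n) \<le> dist x (S b)" using A(3) assms(4) b by auto
      then show False using b c by auto
    qed
  qed
  moreover have "n \<notin> ?B" using c by auto
  ultimately have "insert n ?B \<subseteq> A" using assms(4) by auto
  then have "card (insert n ?B) \<le> card A" by (intro card_mono) (use A(1) finite_subset in auto)
  moreover have "card (insert n ?B) = Suc (card ?B)" using \<open>n \<notin> ?B\<close> by simp
  ultimately show False using A(2) assms(3) by simp
qed

lemma R_upper:
  assumes "m \<in> {1..M}" "is_knn S N t (Sstar m) A" "n \<in> A"
  shows "dist (Sstar m) (S n) \<le> Rdist S Sstar M N t"
proof -
  let ?X = "\<lambda>m. {dist (Sstar m) (S n) | n A. n \<le> N \<and> is_knn S N t (Sstar m) A \<and> n \<in> A}"
  have nN: "n \<le> N" using assms unfolding is_knn_def by auto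
  have fin: "finite (?X m)"
    by (rule finite_subset[of _ "(\<lambda>n. dist (Sstar m) (S n)) ` {..N}"]) auto
  have "dist (Sstar m) (S n) \<le> Sup (?X m)"
    by (rule cSup_upper) (use assms nN fin in \<open>auto intro: bdd_above_finite\<close>)
  also have "\<dots> \<le> Rdist S Sstar M N t" unfolding Rdist_def
    by (rule Max_ge) (use assms in auto)
  finally show ?thesis .
qed

lemma R_le:
  assumes "1 \<le> M" "1 \<le> t" "t \<le> N"
    "\<forall>m\<in>{1..M}. t \<le> card {n\<in>{1..N}. dist (Sstar m) (S n) \<le> r}"
  shows "Rdist S Sstar M N t \<le> r"
  unfolding Rdist_def
proof (subst Max_le_iff, simp, use assms(1) in simp, clarify)
  fix m assume m: "m \<in> {1..M}"
  obtain A where A: "is_knn S N t (Sstar m) A" using knn_exists assms(3) by blast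
  then have "card A = t" using assms(3) unfolding is_knn_def by auto
  then obtain n where "n \<in> A" using assms(2) by (metis card.empty ex_in_conv not_one_le_zero)
  then have nN: "n \<le> N" using A unfolding is_knn_def by auto
  show "Sup {dist (Sstar m) (S n) | n A. n \<le> N \<and> is_knn S N t (Sstar m) A \<and> n \<in> A} \<le> r"
  proof (rule cSup_least)
    show "{dist (Sstar m) (S n) | n A. n \<le> N \<and> is_knn S N t (Sstar m) A \<and> n \<in> A} \<noteq> {}"
      using A \<open>n \<in> A\<close> nN by blast
  next
    fix x assume "x \<in> {dist (Sstar m) (S n) | n A. n \<le> N \<and> is_knn S N t (Sstar m) A \<and> n \<in> A}"
    then obtain n' A' where "x = dist (Sstar m) (S n')" "is_knn S N t (Sstar m) A'" "n' \<in> A'" by blast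
    then show "x \<le> r" using knn_bound[of S N t "Sstar m" A' r n'] assms(3,4) m by auto
  qed
qed


lemma k_step:
  assumes "adaptive_k S Sstar M a k" "N \<ge> 1"
  shows "k (N+1) = k N \<or> k (N+1) = k N + 1"
  using assms unfolding adaptive_k_def by (metis)

lemma k_basic:
  assumes "adaptive_k S Sstar M a k" "N \<ge> 1"
  shows "1 \<le> k N \<and> k N \<le> N"
  using assms(2)
proof (induction N rule: dec_induct)
  case base then show ?case using assms(1) unfolding adaptive_k_def by auto
next
  case (step n) then show ?case using k_step[OF assms(1), of n] by auto
qed

lemma k_mono:
  assumes "adaptive_k S Sstar M a k" "1 \<le> N" "N \<le> N'"
  shows "k N \<le> k N'"
  using assms(3)
proof (induction N' rule: dec_induct)
  case base then show ?case by simp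
next
  case (step n) then show ?case using k_step[OF assms(1), of n] assms(2) by auto
qed



lemma k_rec:
  assumes "adaptive_k S Sstar M a k" "N \<ge> 1"
  shows "k (Suc N) = (if Rdist S Sstar M (Suc N) (k N + 1) \<le> a (k N) then k N + 1 else k N)"
proof -
  have "\<forall>N\<ge>1. k (N + 1) = (if Rdist S Sstar M (N + 1) (k N + 1) \<le> a (k N) then k N + 1 else k N)"
    using assms(1) unfolding adaptive_k_def by blast
  then show ?thesis using assms(2) by (metis Suc_eq_plus1)
qed

lemma k_inv:
  assumes "adaptive_k S Sstar M a k" "N \<ge> 1"
  shows "k N \<ge> 2 \<longrightarrow> (\<forall>m\<in>{1..M}. k N \<le> card {n\<in>{1..N}. dist (Sstar m) (S n) \<le> a (k N - 1)})"
  using assms(2)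
proof (induction N rule: dec_induct)
  case base
  have "k 1 = 1" using assms(1) unfolding adaptive_k_def by blast
  then show ?case by simp
next
  case (step N)
  show ?case
  proof (cases "Rdist S Sstar M (Suc N) (k N + 1) \<le> a (k N)")
    case True
    then have kN: "k (Suc N) = k N + 1" using k_rec[OF assms(1) step(1)] by simp
    have le: "k N + 1 \<le> Suc N" using k_basic[OF assms(1) step(1)] by simp
    show ?thesis
    proof (intro impI ballI)
      fix m assume m: "m \<in> {1..M}"
      obtain A where A: "is_knn S (Suc N) (k N + 1) (Sstar m) A" using knn_exists[OF le] by blast
      then have cA: "card A = k N + 1" and sub: "A \<subseteq> {1..Suc N}"
        using le unfolding is_knn_def by auto
      let ?B = "{n\<in>{1..Suc N}. dist (Sstar m) (S n) \<le> a (k (Suc N) - 1)}"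
      have "A \<subseteq> ?B"
      proof
        fix n assume n: "n \<in> A"
        have "dist (Sstar m) (S n) \<le> Rdist S Sstar M (Suc N) (k N + 1)"
          by (rule R_upper[of m M S "Suc N" "k N + 1" Sstar A n, OF m A n])
        then have "dist (Sstar m) (S n) \<le> a (k (Suc N) - 1)" using True kN by simp
        then show "n \<in> ?B" using sub n by blast
      qed
      then have "card A \<le> card ?B" by (intro card_mono) auto
      then show "k (Suc N) \<le> card ?B" using cA kN by simp
    qed
  next
    case False
    then have kN: "k (Suc N) = k N" using k_rec[OF assms(1) step(1)] by simp
    show ?thesis
    proof (intro impI ballI)
      fix m assume m: "m \<in> {1..M}" and k2: "2 \<le> k (Suc N)"
      have "k N \<le> card {n\<in>{1..N}. dist (Sstar m) (S n) \<le> a (k N - 1)}" using step(3) m k2 kN by simp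
      also have "\<dots> \<le> card {n\<in>{1..Suc N}. dist (Sstar m) (S n) \<le> a (k N - 1)}"
        by (intro card_mono) auto
      finally show "k (Suc N) \<le> card {n\<in>{1..Suc N}. dist (Sstar m) (S n) \<le> a (k (Suc N) - 1)}"
        using kN by simp
    qed
  qed
qed


lemma k_grows:
  assumes "adaptive_k S Sstar M a k" "infill S Sstar M" "\<forall>t\<ge>1. a t > 0" "M \<ge> 1" "N \<ge> 1"
  shows "\<exists>N'>N. k N' > k N"
proof (rule ccontr)
  assume "\<not> ?thesis"
  note nt = this
  have const: "\<forall>N'\<ge>N. k N' = k N"
  proof (intro allI impI)
    fix N' assume NN: "N \<le> N'"
    then have "k N \<le> k N'" using k_mono[OF assms(1) assms(5)] by blast
    moreover have "k N' \<le> k N" using nt NN by (cases "N' = N") (auto simp: not_less, metis le_neq_implies_less not_le)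
    ultimately show "k N' = k N" by simp
  qed
  define K where "K = k N"
  have K1: "K \<ge> 1" "K \<le> N" using k_basic[OF assms(1,5)] K_def by auto
  define r where "r = a K / 2"
  have r: "r > 0" "r < a K" using assms(3) K1 r_def by auto
  have "\<forall>m\<in>{1..M}. eventually (\<lambda>N''. K + 1 \<le> card {n\<in>{1..N''}. dist (Sstar m) (S n) \<le> r}) sequentially"
  proof
    fix m assume m: "m \<in> {1..M}"
    have "infinite {n. n \<ge> 1 \<and> S n \<in> ball (Sstar m) r}"
      using assms(2) m r(1) unfolding infill_def by (meson centre_in_ball open_ball)
    then obtain F where F: "F \<subseteq> {n. n \<ge> 1 \<and> S n \<in> ball (Sstar m) r}" "finite F" "card F = K + 1"
      using infinite_arbitrarily_large by blast
    show "eventually (\<lambda>N''. K + 1 \<le> card {n\<in>{1..N''}. dist (Sstar m) (S n) \<le> r}) sequentially"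
      unfolding eventually_sequentially
    proof (intro exI[of _ "Max F"] allI impI)
      fix N'' assume "Max F \<le> N''"
      then have "F \<subseteq> {n\<in>{1..N''}. dist (Sstar m) (S n) \<le> r}"
      proof -
        assume MF: "Max F \<le> N''"
        show ?thesis
        proof
          fix n assume n: "n \<in> F"
          have "n \<le> Max F" using Max_ge[OF F(2) n] .
          then show "n \<in> {n\<in>{1..N''}. dist (Sstar m) (S n) \<le> r}" using MF n F(1) by auto
        qed
      qed
      then have "card F \<le> card {n\<in>{1..N''}. dist (Sstar m) (S n) \<le> r}" by (intro card_mono) auto
      then show "K + 1 \<le> card {n\<in>{1..N''}. dist (Sstar m) (S n) \<le> r}" using F by simp
    qed
  qed
  then have "eventually (\<lambda>N''. \<forall>m\<in>{1..M}. K + 1 \<le> card {n\<in>{1..N''}. dist (Sstar m) (S n) \<le> r}) sequentially"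
    by (intro eventually_ball_finite) auto
  then obtain N1 where N1: "\<forall>N''\<ge>N1. \<forall>m\<in>{1..M}. K + 1 \<le> card {n\<in>{1..N''}. dist (Sstar m) (S n) \<le> r}"
    unfolding eventually_sequentially by blast
  define N2 where "N2 = max N1 N"
  have "Rdist S Sstar M (N2 + 1) (K + 1) \<le> r"
    by (rule R_le) (use assms(4) K1 N1 N2_def in auto)
  moreover have c1: "k (N2+1) = K" "k N2 = K" using const[rule_format, of N2] const[rule_format, of "N2+1"] N2_def K_def by auto
  ultimately have "Rdist S Sstar M (N2 + 1) (k N2 + 1) \<le> a (k N2)"
    using r by simp
  moreover have "N2 \<ge> 1" using assms(5) N2_def by auto
  then have "k (N2+1) = (if Rdist S Sstar M (N2 + 1) (k N2 + 1) \<le> a (k N2) then k N2 + 1 else k N2)"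
    using assms(1) unfolding adaptive_k_def by blast
  ultimately have "k (N2+1) = k N2 + 1" by simp
  then show False using c1 by simp
qed

lemma k_unbounded:
  assumes "adaptive_k S Sstar M a k" "infill S Sstar M" "\<forall>t\<ge>1. a t > 0" "M \<ge> 1"
  shows "\<exists>N\<ge>1. k N \<ge> j + 1"
proof (induction j)
  case 0 then show ?case using k_basic[OF assms(1), of 1] by (intro exI[of _ 1]) simp
next
  case (Suc j)
  then obtain N where "N \<ge> 1" "k N \<ge> j + 1" by auto
  then obtain N' where "N' > N" "k N' > k N" using k_grows[OF assms \<open>N \<ge> 1\<close>] by blast
  then show ?case using \<open>N \<ge> 1\<close> \<open>k N \<ge> j + 1\<close> by (intro exI[of _ N']) auto
qed


theorem lemmaE1:
  fixes S Sstar :: "nat \<Rightarrow> 'a::metric_space" and M :: nat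
    and a :: "nat \<Rightarrow> real" and k :: "nat \<Rightarrow> nat"
  assumes "inj_on Sstar {1..M}"
    and "infill S Sstar M"
    and "\<forall>t\<ge>1. a t > 0"
    and "a \<longlonglongrightarrow> 0"
    and "adaptive_k S Sstar M a k"
  shows "\<exists>N0. \<forall>N\<ge>N0. \<forall>sel :: nat \<Rightarrow> nat set.
           (\<forall>m\<in>{1..M}. is_knn S N (k N) (Sstar m) (sel m)) \<longrightarrow>
           (\<forall>m\<in>{1..M}. \<forall>m'\<in>{1..M}. m \<noteq> m' \<longrightarrow>
              (\<forall>n\<in>{1..N}. Psi_entry (k N) (sel m) n * Psi_entry (k N) (sel m') n = 0))"
proof (cases "M = 0")
  case True then show ?thesis by auto
next
  case False
  then have M1: "M \<ge> 1" by simp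
  define D where "D = (\<lambda>(m, m'). dist (Sstar m) (Sstar m')) ` {(m, m'). m \<in> {1..M} \<and> m' \<in> {1..M} \<and> m \<noteq> m'}"
  have finD: "finite D" unfolding D_def
    by (rule finite_imageI, rule finite_subset[of _ "{1..M} \<times> {1..M}"]) auto
  have posD: "\<forall>x\<in>D. x > 0"
  proof
    fix x assume "x \<in> D"
    then obtain m m' where "m \<in> {1..M}" "m' \<in> {1..M}" "m \<noteq> m'" "x = dist (Sstar m) (Sstar m')"
      unfolding D_def by auto
    then have "Sstar m \<noteq> Sstar m'" using inj_onD[OF assms(1)] by blast
    then show "x > 0" using \<open>x = dist (Sstar m) (Sstar m')\<close> by simp
  qed
  define \<delta> where "\<delta> = Min (insert 1 D) / 2"
  have \<delta>pos: "\<delta> > 0" unfolding \<delta>_def using finD posD by (simp add: Min_gr_iff)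
  have \<delta>le: "2 * \<delta> \<le> dist (Sstar m) (Sstar m')" if "m \<in> {1..M}" "m' \<in> {1..M}" "m \<noteq> m'" for m m'
  proof -
    have "(m, m') \<in> {(m, m'). m \<in> {1..M} \<and> m' \<in> {1..M} \<and> m \<noteq> m'}" using that by simp
    then have "dist (Sstar m) (Sstar m') \<in> D" unfolding D_def by (rule rev_image_eqI) simp
    then have "Min (insert 1 D) \<le> dist (Sstar m) (Sstar m')" using finD by simp
    then show ?thesis unfolding \<delta>_def by simp
  qed
  have "eventually (\<lambda>t. a t < \<delta>) sequentially"
    using order_tendstoD(2)[OF assms(4) \<delta>pos] .
  then obtain T where T: "\<forall>t\<ge>T. a t < \<delta>" unfolding eventually_sequentially by blast
  obtain N1 where N1: "N1 \<ge> 1" "k N1 \<ge> T + 2"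
    using k_unbounded[OF assms(5) assms(2) assms(3) M1, of "T + 1"] by auto
  show ?thesis
  proof (intro exI[of _ N1] allI impI ballI)
    fix N sel m m' n
    assume N: "N1 \<le> N" and sel: "\<forall>m\<in>{1..M}. is_knn S N (k N) (Sstar m) (sel m)"
      and m: "m \<in> {1..M}" and m': "m' \<in> {1..M}" and mm: "m \<noteq> m'" and n: "n \<in> {1..N}"
    have N1': "N \<ge> 1" using N N1 by simp
    have kN: "k N \<ge> T + 2" using k_mono[OF assms(5) N1(1) N] N1 by simp
    have kNN: "k N \<le> N" using k_basic[OF assms(5) N1'] by simp
    define r where "r = a (k N - 1)"
    have r: "r < \<delta>" unfolding r_def using T kN by simp
    have cards: "\<forall>m\<in>{1..M}. k N \<le> card {n\<in>{1..N}. dist (Sstar m) (S n) \<le> r}"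
      using k_inv[OF assms(5) N1'] kN unfolding r_def by simp
    have "\<not> (n \<in> sel m \<and> n \<in> sel m')"
    proof
      assume h: "n \<in> sel m \<and> n \<in> sel m'"
      have d1: "dist (Sstar m) (S n) \<le> r"
        using knn_bound[of S N "k N" "Sstar m" "sel m" r n] sel m kNN cards h by auto
      have d2: "dist (Sstar m') (S n) \<le> r"
        using knn_bound[of S N "k N" "Sstar m'" "sel m'" r n] sel m' kNN cards h by auto
      have "dist (Sstar m) (Sstar m') \<le> dist (Sstar m) (S n) + dist (Sstar m') (S n)"
        by (rule dist_triangle2)
      also have "\<dots> < 2 * \<delta>" using d1 d2 r by simp
      finally show False using \<delta>le[OF m m' mm] by simp
    qed
    then show "Psi_entry (k N) (sel m) n * Psi_entry (k N) (sel m') n = 0"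
      unfolding Psi_entry_def by auto
  qed
qed

end
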